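(* Let $k$ be a commutative Noetherian ring and let $R$ be a reduced commutative $k$-algebra that is finitely generated as a $k$-module. Then $\mathrm{Aut}_{k\text{-alg}}(R)$ is a finite group.
   Context: Reduced means no nonzero nilpotent elements. *)

theory Defs
  imports Main
begin

definition is_ring_hom :: "('a::comm_ring_1 \<Rightarrow> 'b::comm_ring_1) \<Rightarrow> bool" where
  "is_ring_hom f \<longleftrightarrow> f 1 = 1 \<and> (\<forall>x y. f (x + y) = f x + f y) \<and> (\<forall>x y. f (x * y) = f x * f y)"

definition is_ideal :: "'a::comm_ring_1 set \<Rightarrow> bool" where
  "is_ideal I \<longleftrightarrow> 0 \<in> I \<and> (\<forall>x\<in>I. \<forall>y\<in>I. x + y \<in> I) \<and> (\<forall>r. \<forall>x\<in>I. r * x \<in> I)"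

definition noetherian_ring :: "'a::comm_ring_1 itself \<Rightarrow> bool" where
  "noetherian_ring _ \<longleftrightarrow> (\<forall>I::'a set. is_ideal I \<longrightarrow>
     (\<exists>F. finite F \<and> F \<subseteq> I \<and> I = {\<Sum>x\<in>F. c x * x | c. True}))"

definition reduced_ring :: "'a::comm_ring_1 itself \<Rightarrow> bool" where
  "reduced_ring _ \<longleftrightarrow> (\<forall>(x::'a) (n::nat). x ^ n = 0 \<longrightarrow> x = 0)"

text \<open>R, a k-algebra via the structure map phi, is finitely generated as a k-module.\<close>
definition finite_module_over :: "('k::comm_ring_1 \<Rightarrow> 'r::comm_ring_1) \<Rightarrow> bool" where
  "finite_module_over phi \<longleftrightarrow> (\<exists>S. finite S \<and> (\<forall>r. \<exists>c. r = (\<Sum>s\<in>S. phi (c s) * s)))"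

definition alg_auts :: "('k::comm_ring_1 \<Rightarrow> 'r::comm_ring_1) \<Rightarrow> ('r \<Rightarrow> 'r) set" where
  "alg_auts phi = {f. bij f \<and> is_ring_hom f \<and> (\<forall>c x. f (phi c * x) = phi c * f x)}"

end

theory Submission
  imports Defs "HOL-Computational_Algebra.Polynomial" "HOL-Library.FuncSet"
begin

lemma hom_add: "is_ring_hom f \<Longrightarrow> f (x + y) = f x + f y"
  unfolding is_ring_hom_def by blast
lemma hom_mult: "is_ring_hom f \<Longrightarrow> f (x * y) = f x * f y"
  unfolding is_ring_hom_def by blast
lemma hom_1: "is_ring_hom f \<Longrightarrow> f 1 = 1"
  unfolding is_ring_hom_def by blast
lemma hom_0: assumes "is_ring_hom f" shows "f 0 = 0"
proof -
  have "f 0 = f 0 + f 0" using hom_add[OF assms, of 0 0] by simp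
  thus ?thesis by simp
qed
lemma hom_uminus: assumes "is_ring_hom f" shows "f (- x) = - f x"
proof -
  have "f (-x) + f x = 0" using hom_add[OF assms, of "-x" x] hom_0[OF assms] by simp
  thus ?thesis by (simp add: eq_neg_iff_add_eq_0)
qed
lemma hom_diff: assumes "is_ring_hom f" shows "f (x - y) = f x - f y"
  using hom_add[OF assms, of x "-y"] hom_uminus[OF assms, of y] by simp
lemma hom_sum: "is_ring_hom f \<Longrightarrow> f (sum g A) = (\<Sum>a\<in>A. f (g a))"
  by (induction A rule: infinite_finite_induct) (auto simp: hom_0 hom_add)
lemma hom_power: "is_ring_hom f \<Longrightarrow> f (x ^ n) = f x ^ n"
  by (induction n) (auto simp: hom_1 hom_mult)
definition submod :: "('k::comm_ring_1 \<Rightarrow> 'r::comm_ring_1) \<Rightarrow> 'r set \<Rightarrow> bool" where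
  "submod phi N \<longleftrightarrow> 0 \<in> N \<and> (\<forall>x\<in>N. \<forall>y\<in>N. x + y \<in> N) \<and> (\<forall>c. \<forall>x\<in>N. phi c * x \<in> N)"

definition spn :: "('k::comm_ring_1 \<Rightarrow> 'r::comm_ring_1) \<Rightarrow> 'r set \<Rightarrow> 'r set" where
  "spn phi F = {\<Sum>x\<in>F. phi (c x) * x | c. True}"

lemma spnI: "x = (\<Sum>z\<in>F. phi (c z) * z) \<Longrightarrow> x \<in> spn phi F"
  unfolding spn_def by blast

lemma submod_sum: "submod phi N \<Longrightarrow> (\<And>a. a \<in> A \<Longrightarrow> g a \<in> N) \<Longrightarrow> sum g A \<in> N"
  unfolding submod_def by (induction A rule: infinite_finite_induct) auto

lemma spn_sub: "submod phi N \<Longrightarrow> F \<subseteq> N \<Longrightarrow> spn phi F \<subseteq> N"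
proof
  fix x assume "submod phi N" "F \<subseteq> N" "x \<in> spn phi F"
  then obtain c where "x = (\<Sum>z\<in>F. phi (c z) * z)" unfolding spn_def by auto
  moreover have "(\<Sum>z\<in>F. phi (c z) * z) \<in> N"
    by (rule submod_sum[OF \<open>submod phi N\<close>]) (use \<open>submod phi N\<close> \<open>F \<subseteq> N\<close> in \<open>auto simp: submod_def\<close>)
  ultimately show "x \<in> N" by simp
qed

lemma spn_add: assumes "is_ring_hom phi" "x \<in> spn phi F" "y \<in> spn phi F"
  shows "x + y \<in> spn phi F"
proof -
  obtain c d where "x = (\<Sum>z\<in>F. phi (c z) * z)" "y = (\<Sum>z\<in>F. phi (d z) * z)"
    using assms unfolding spn_def by auto
  hence "x + y = (\<Sum>z\<in>F. phi (c z + d z) * z)"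
    by (simp add: hom_add[OF assms(1)] sum.distrib distrib_right)
  thus ?thesis by (rule spnI)
qed

lemma spn_smult: assumes "is_ring_hom phi" "x \<in> spn phi F"
  shows "phi a * x \<in> spn phi F"
proof -
  obtain c where "x = (\<Sum>z\<in>F. phi (c z) * z)"
    using assms unfolding spn_def by auto
  hence "phi a * x = (\<Sum>z\<in>F. phi (a * c z) * z)"
    by (simp add: hom_mult[OF assms(1)] sum_distrib_left mult.assoc)
  thus ?thesis by (rule spnI)
qed

lemma spn_zero: assumes "is_ring_hom phi" shows "0 \<in> spn phi F"
proof -
  have "0 = (\<Sum>z\<in>F. phi 0 * z)" by (simp add: hom_0[OF assms])
  thus ?thesis by (rule spnI)
qed

lemma submod_spn: "is_ring_hom phi \<Longrightarrow> submod phi (spn phi F)"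
  unfolding submod_def using spn_add spn_smult spn_zero by blast

lemma spn_mono: assumes "is_ring_hom phi" "finite G" "F \<subseteq> G"
  shows "spn phi F \<subseteq> spn phi G"
proof
  fix x assume "x \<in> spn phi F"
  then obtain c where x: "x = (\<Sum>z\<in>F. phi (c z) * z)" unfolding spn_def by auto
  have "(\<Sum>z\<in>G. phi (if z \<in> F then c z else 0) * z) = (\<Sum>z\<in>F. phi (if z \<in> F then c z else 0) * z)"
    by (rule sum.mono_neutral_right[OF assms(2) assms(3)]) (auto simp: hom_0[OF assms(1)])
  also have "\<dots> = x" using x by simp
  finally show "x \<in> spn phi G" by (rule spnI[OF sym])
qed

lemma spn_mem: assumes "is_ring_hom phi" "finite F" "x \<in> F" shows "x \<in> spn phi F"
proof -
  have "(\<Sum>z\<in>F. phi (if z = x then 1 else 0) * z) = (\<Sum>z\<in>F. if z = x then z else 0)"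
    by (rule sum.cong) (auto simp: hom_0[OF assms(1)] hom_1[OF assms(1)])
  also have "\<dots> = x" using assms by simp
  finally have "(\<Sum>z\<in>F. phi (if z = x then 1 else 0) * z) = x" .
  thus ?thesis by (rule spnI[OF sym])
qed

lemma submod_neg: assumes "is_ring_hom phi" "submod phi N" "x \<in> N" shows "- x \<in> N"
proof -
  have "phi (-1) * x \<in> N" using assms unfolding submod_def by blast
  thus ?thesis by (simp add: hom_uminus[OF assms(1)] hom_1[OF assms(1)])
qed

lemma submod_diff: assumes "is_ring_hom phi" "submod phi N" "x \<in> N" "y \<in> N" shows "x - y \<in> N"
proof -
  have "x + - y \<in> N" using submod_neg[OF assms(1,2) assms(4)] assms(2,3) unfolding submod_def by blast
  thus ?thesis by simp
qed

lemma spn_empty: "spn phi {} = {0}"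
  unfolding spn_def by auto

lemma spn_insert_elim: assumes "finite T" "s \<notin> T" "x \<in> spn phi (insert s T)"
  shows "\<exists>a t. t \<in> spn phi T \<and> x = phi a * s + t"
proof -
  obtain c where "x = (\<Sum>z\<in>insert s T. phi (c z) * z)" using assms unfolding spn_def by auto
  hence "x = phi (c s) * s + (\<Sum>z\<in>T. phi (c z) * z)" using assms by simp
  thus ?thesis using spnI by blast
qed

lemma fg_aux:
  assumes hom: "is_ring_hom phi" and noeth: "noetherian_ring TYPE('k)" and fin: "finite S"
  shows "\<And>N. submod phi N \<Longrightarrow> N \<subseteq> spn (phi::'k::comm_ring_1 \<Rightarrow> 'r::comm_ring_1) S \<Longrightarrow>
     \<exists>F. finite F \<and> F \<subseteq> N \<and> N = spn phi F"
  using fin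
proof (induction S rule: finite_induct)
  case empty
  hence "N = {0}" using spn_empty[of phi] unfolding submod_def by auto
  thus ?case using spn_empty[of phi] by (intro exI[of _ "{}"]) auto
next
  case (insert s T N)
  define J where "J = {a. \<exists>t\<in>spn phi T. phi a * s + t \<in> N}"
  have N: "submod phi N" by fact
  have sT: "submod phi (spn phi T)" by (rule submod_spn[OF hom])
  have "is_ideal J" unfolding is_ideal_def
  proof (intro conjI ballI allI)
    show "0 \<in> J" unfolding J_def using spn_zero[OF hom, of T] N
      by (auto simp: hom_0[OF hom] submod_def intro!: bexI[of _ 0])
  next
    fix x y assume "x \<in> J" "y \<in> J"
    then obtain t u where t: "t \<in> spn phi T" "phi x * s + t \<in> N" and u: "u \<in> spn phi T" "phi y * s + u \<in> N"
      unfolding J_def by auto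
    have "(phi x * s + t) + (phi y * s + u) \<in> N" using t u N unfolding submod_def by blast
    moreover have "(phi x * s + t) + (phi y * s + u) = phi (x + y) * s + (t + u)"
      by (simp add: hom_add[OF hom] algebra_simps)
    moreover have "t + u \<in> spn phi T" using t u spn_add[OF hom] by blast
    ultimately show "x + y \<in> J" unfolding J_def by auto
  next
    fix r x assume "x \<in> J"
    then obtain t where t: "t \<in> spn phi T" "phi x * s + t \<in> N" unfolding J_def by auto
    have "phi r * (phi x * s + t) \<in> N" using t N unfolding submod_def by blast
    moreover have "phi r * (phi x * s + t) = phi (r * x) * s + phi r * t"
      by (simp add: hom_mult[OF hom] algebra_simps)
    moreover have "phi r * t \<in> spn phi T" using t spn_smult[OF hom] by blast
    ultimately show "r * x \<in> J" unfolding J_def by auto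
  qed
  then obtain G where G: "finite G" "G \<subseteq> J" "J = {\<Sum>x\<in>G. c x * x | c. True}"
    using noeth[unfolded noetherian_ring_def, rule_format, OF \<open>is_ideal J\<close>] by blast
  define tg where "tg g = (SOME t. t \<in> spn phi T \<and> phi g * s + t \<in> N)" for g
  have tg: "tg g \<in> spn phi T \<and> phi g * s + tg g \<in> N" if "g \<in> G" for g
  proof -
    have "\<exists>t. t \<in> spn phi T \<and> phi g * s + t \<in> N" using that G(2) unfolding J_def by auto
    thus ?thesis unfolding tg_def by (rule someI_ex)
  qed
  define N' where "N' = N \<inter> spn phi T"
  have "submod phi N'" using N sT unfolding N'_def submod_def by auto
  then obtain F' where F': "finite F'" "F' \<subseteq> N'" "N' = spn phi F'"
    using insert.IH[of N'] unfolding N'_def by auto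
  define F where "F = F' \<union> (\<lambda>g. phi g * s + tg g) ` G"
  have finF: "finite F" unfolding F_def using F' G by auto
  have FN: "F \<subseteq> N" unfolding F_def using F' tg unfolding N'_def by auto
  have "N \<subseteq> spn phi F"
  proof
    fix x assume "x \<in> N"
    then obtain a t where at: "t \<in> spn phi T" "x = phi a * s + t"
      using spn_insert_elim[OF insert.hyps(1,2)] insert.prems(2) by blast
    hence "a \<in> J" unfolding J_def using \<open>x \<in> N\<close> by auto
    then obtain c where c: "a = (\<Sum>g\<in>G. c g * g)" using G(3) by auto
    define y where "y = (\<Sum>g\<in>G. phi (c g) * (phi g * s + tg g))"
    have yF: "y \<in> spn phi F" unfolding y_def
      by (rule submod_sum[OF submod_spn[OF hom]], rule spn_smult[OF hom],
          rule spn_mem[OF hom finF]) (auto simp: F_def)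
    have yN: "y \<in> N" using yF spn_sub[OF N FN] by blast
    have "y = phi a * s + (\<Sum>g\<in>G. phi (c g) * tg g)"
      unfolding y_def c by (simp add: hom_sum[OF hom] hom_mult[OF hom] distrib_left sum.distrib
          sum_distrib_right mult.assoc)
    hence xy: "x - y = t - (\<Sum>g\<in>G. phi (c g) * tg g)" using at by simp
    have "(\<Sum>g\<in>G. phi (c g) * tg g) \<in> spn phi T"
      by (rule submod_sum[OF sT], rule spn_smult[OF hom]) (use tg in auto)
    hence "x - y \<in> spn phi T" unfolding xy using submod_diff[OF hom sT] at by blast
    moreover have "x - y \<in> N" using submod_diff[OF hom N \<open>x \<in> N\<close> yN] .
    ultimately have "x - y \<in> spn phi F'" using F'(3) unfolding N'_def by auto
    hence "x - y \<in> spn phi F" using spn_mono[OF hom finF, of F'] unfolding F_def by auto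
    hence "(x - y) + y \<in> spn phi F" using yF spn_add[OF hom] by blast
    thus "x \<in> spn phi F" by simp
  qed
  moreover have "spn phi F \<subseteq> N" using spn_sub[OF N FN] .
  ultimately show ?case using finF FN by auto
qed

lemma fg:
  assumes hom: "is_ring_hom phi" and noeth: "noetherian_ring TYPE('k)"
    and fm: "finite_module_over (phi::'k::comm_ring_1 \<Rightarrow> 'r::comm_ring_1)" and N: "submod phi N"
  shows "\<exists>F. finite F \<and> F \<subseteq> N \<and> N = spn phi F"
proof -
  obtain S where S: "finite S" "\<forall>r. \<exists>c. r = (\<Sum>s\<in>S. phi (c s) * s)"
    using fm unfolding finite_module_over_def by blast
  have "N \<subseteq> spn phi S" by (metis S(2) spnI subsetI)
  thus ?thesis using fg_aux[OF hom noeth S(1) N] by blast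
qed


lemma chain_fin_bound:
  assumes ch: "chain\<^sub>\<subseteq> C" and ne: "C \<noteq> {}" and fin: "finite F"
  shows "F \<subseteq> \<Union>C \<Longrightarrow> \<exists>U\<in>C. F \<subseteq> U"
  using fin
proof (induction F rule: finite_induct)
  case empty thus ?case using ne by auto
next
  case (insert x F)
  then obtain U where U: "U \<in> C" "F \<subseteq> U" by auto
  obtain V where V: "V \<in> C" "x \<in> V" using insert.prems by auto
  have "U \<subseteq> V \<or> V \<subseteq> U" using ch U(1) V(1) unfolding chain_subset_def by blast
  thus ?case using U V by blast
qed

lemma noeth_max:
  assumes hom: "is_ring_hom phi" and noeth: "noetherian_ring TYPE('k)"
    and fm: "finite_module_over (phi::'k::comm_ring_1 \<Rightarrow> 'r::comm_ring_1)"
    and ne: "A \<noteq> {}" and sub: "\<And>X. X \<in> A \<Longrightarrow> submod phi X"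
  shows "\<exists>M\<in>A. \<forall>X\<in>A. M \<subseteq> X \<longrightarrow> X = M"
proof (rule Zorn_Lemma2, rule ballI)
  fix C assume "C \<in> chains A"
  hence CA: "C \<subseteq> A" and ch: "chain\<^sub>\<subseteq> C" unfolding chains_def by auto
  show "\<exists>U\<in>A. \<forall>X\<in>C. X \<subseteq> U"
  proof (cases "C = {}")
    case True thus ?thesis using ne by auto
  next
    case False
    have "submod phi (\<Union>C)" unfolding submod_def
    proof (intro conjI ballI allI)
      show "0 \<in> \<Union>C" using False CA sub unfolding submod_def by blast
    next
      fix x y assume "x \<in> \<Union>C" "y \<in> \<Union>C"
      then obtain X Y where XY: "X \<in> C" "Y \<in> C" "x \<in> X" "y \<in> Y" by auto
      have "X \<subseteq> Y \<or> Y \<subseteq> X" using ch XY unfolding chain_subset_def by blast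
      moreover have "submod phi X" "submod phi Y" using XY CA sub by auto
      ultimately show "x + y \<in> \<Union>C" using XY unfolding submod_def by blast
    next
      fix c x assume "x \<in> \<Union>C"
      then obtain X where X: "X \<in> C" "x \<in> X" by auto
      hence "submod phi X" using CA sub by auto
      thus "phi c * x \<in> \<Union>C" using X unfolding submod_def by blast
    qed
    then obtain F where F: "finite F" "F \<subseteq> \<Union>C" "\<Union>C = spn phi F"
      using fg[OF hom noeth fm \<open>submod phi (\<Union>C)\<close>] by blast
    then obtain U where U: "U \<in> C" "F \<subseteq> U" using chain_fin_bound[OF ch False] by blast
    have "submod phi U" using U(1) CA sub by auto
    hence "spn phi F \<subseteq> U" using spn_sub[OF _ U(2)] by blast
    hence "\<forall>X\<in>C. X \<subseteq> U" using F(3) by blast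
    thus ?thesis using U(1) CA by blast
  qed
qed


definition powspan :: "('k::comm_ring_1 \<Rightarrow> 'r::comm_ring_1) \<Rightarrow> 'r \<Rightarrow> nat \<Rightarrow> 'r set" where
  "powspan phi s n = {\<Sum>i<n. phi (c i) * s ^ i | c. True}"

lemma powspanI: "x = (\<Sum>i<n. phi (c i) * s ^ i) \<Longrightarrow> x \<in> powspan phi s n"
  unfolding powspan_def by blast

lemma submod_powspan: assumes hom: "is_ring_hom phi" shows "submod phi (powspan phi s n)"
  unfolding submod_def
proof (intro conjI ballI allI)
  have "0 = (\<Sum>i<n. phi 0 * s ^ i)" by (simp add: hom_0[OF hom])
  thus "0 \<in> powspan phi s n" by (rule powspanI)
next
  fix x y assume "x \<in> powspan phi s n" "y \<in> powspan phi s n"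
  then obtain c d where "x = (\<Sum>i<n. phi (c i) * s ^ i)" "y = (\<Sum>i<n. phi (d i) * s ^ i)"
    unfolding powspan_def by auto
  hence "x + y = (\<Sum>i<n. phi (c i + d i) * s ^ i)"
    by (simp add: hom_add[OF hom] sum.distrib distrib_right)
  thus "x + y \<in> powspan phi s n" by (rule powspanI)
next
  fix a x assume "x \<in> powspan phi s n"
  then obtain c where "x = (\<Sum>i<n. phi (c i) * s ^ i)" unfolding powspan_def by auto
  hence "phi a * x = (\<Sum>i<n. phi (a * c i) * s ^ i)"
    by (simp add: hom_mult[OF hom] sum_distrib_left mult.assoc)
  thus "phi a * x \<in> powspan phi s n" by (rule powspanI)
qed

lemma powspan_Suc: assumes hom: "is_ring_hom phi"
  shows "powspan phi s n \<subseteq> powspan phi s (Suc n)"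
proof
  fix x assume "x \<in> powspan phi s n"
  then obtain c where x: "x = (\<Sum>i<n. phi (c i) * s ^ i)" unfolding powspan_def by auto
  have "(\<Sum>i<Suc n. phi (if i < n then c i else 0) * s ^ i) = (\<Sum>i<n. phi (c i) * s ^ i)"
    by (simp add: hom_0[OF hom])
  thus "x \<in> powspan phi s (Suc n)" unfolding x by (rule powspanI[OF sym])
qed

lemma integral:
  assumes hom: "is_ring_hom phi" and noeth: "noetherian_ring TYPE('k)"
    and fm: "finite_module_over (phi::'k::comm_ring_1 \<Rightarrow> 'r::comm_ring_1)"
  shows "\<exists>n c. s ^ n = (\<Sum>i<n. phi (c i) * s ^ i)"
proof -
  obtain M where M: "M \<in> range (powspan phi s)" "\<forall>X\<in>range (powspan phi s). M \<subseteq> X \<longrightarrow> X = M"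
    using noeth_max[OF hom noeth fm, of "range (powspan phi s)"] submod_powspan[OF hom] by blast
  then obtain m where m: "M = powspan phi s m" by auto
  have eq: "powspan phi s (Suc m) = powspan phi s m"
    using M(2) powspan_Suc[OF hom, of s m] unfolding m by blast
  have "(\<Sum>i<Suc m. phi (if i = m then 1 else 0) * s ^ i) = s ^ m"
    by (simp add: hom_0[OF hom] hom_1[OF hom])
  hence "s ^ m \<in> powspan phi s (Suc m)" by (rule powspanI[OF sym])
  hence "s ^ m \<in> powspan phi s m" using eq by simp
  thus ?thesis unfolding powspan_def by blast
qed


definition rad :: "'r::comm_ring_1 set \<Rightarrow> 'r set" where
  "rad I = {x. \<exists>n. x ^ n \<in> I}"

definition radical :: "'r::comm_ring_1 set \<Rightarrow> bool" where
  "radical I \<longleftrightarrow> is_ideal I \<and> (\<forall>x n. x ^ n \<in> I \<longrightarrow> x \<in> I)"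

definition primeI :: "'r::comm_ring_1 set \<Rightarrow> bool" where
  "primeI P \<longleftrightarrow> is_ideal P \<and> 1 \<notin> P \<and> (\<forall>a b. a * b \<in> P \<longrightarrow> a \<in> P \<or> b \<in> P)"

lemma ideal_0: "is_ideal I \<Longrightarrow> 0 \<in> I" unfolding is_ideal_def by blast
lemma ideal_add: "is_ideal I \<Longrightarrow> x \<in> I \<Longrightarrow> y \<in> I \<Longrightarrow> x + y \<in> I" unfolding is_ideal_def by blast
lemma ideal_multL: "is_ideal I \<Longrightarrow> x \<in> I \<Longrightarrow> r * x \<in> I" unfolding is_ideal_def by blast
lemma ideal_multR: "is_ideal I \<Longrightarrow> x \<in> I \<Longrightarrow> x * r \<in> I"
  using ideal_multL[of I x r] by (simp add: mult.commute)
lemma ideal_neg: "is_ideal I \<Longrightarrow> x \<in> I \<Longrightarrow> - x \<in> I"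
  using ideal_multL[of I x "-1"] by simp
lemma ideal_diff: "is_ideal I \<Longrightarrow> x \<in> I \<Longrightarrow> y \<in> I \<Longrightarrow> x - y \<in> I"
  using ideal_add[of I x "-y"] ideal_neg[of I y] by simp
lemma ideal_sum: "is_ideal I \<Longrightarrow> (\<And>a. a \<in> A \<Longrightarrow> g a \<in> I) \<Longrightarrow> sum g A \<in> I"
  by (induction A rule: infinite_finite_induct) (auto simp: ideal_0 ideal_add)
lemma ideal_power: "is_ideal I \<Longrightarrow> x ^ n \<in> I \<Longrightarrow> n \<le> m \<Longrightarrow> x ^ m \<in> I"
proof -
  assume "is_ideal I" "x ^ n \<in> I" "n \<le> m"
  hence "x ^ n * x ^ (m - n) \<in> I" using ideal_multR by blast
  thus ?thesis using \<open>n \<le> m\<close> by (simp add: power_add[symmetric])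
qed

lemma ideal_submod: "is_ideal I \<Longrightarrow> submod phi I"
  unfolding submod_def using ideal_0 ideal_add ideal_multL by blast

lemma radical_submod: "radical I \<Longrightarrow> submod phi I"
  unfolding radical_def using ideal_submod by blast

lemma rad_ideal: assumes I: "is_ideal I" shows "is_ideal (rad I)"
  unfolding is_ideal_def
proof (intro conjI ballI allI)
  show "0 \<in> rad I" unfolding rad_def using ideal_0[OF I] by (auto intro!: exI[of _ 1])
next
  fix x y assume "x \<in> rad I" "y \<in> rad I"
  then obtain n m where nm: "x ^ n \<in> I" "y ^ m \<in> I" unfolding rad_def by auto
  have "(x + y) ^ (n + m) = (\<Sum>k\<le>n + m. of_nat ((n + m) choose k) * x ^ k * y ^ (n + m - k))"
    by (rule binomial_ring)
  also have "\<dots> \<in> I"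
  proof (rule ideal_sum[OF I])
    fix k assume "k \<in> {..n + m}"
    show "of_nat ((n + m) choose k) * x ^ k * y ^ (n + m - k) \<in> I"
    proof (cases "n \<le> k")
      case True
      hence "x ^ k \<in> I" using ideal_power[OF I nm(1)] by blast
      thus ?thesis using I by (simp add: ideal_multL ideal_multR)
    next
      case False
      hence "y ^ (n + m - k) \<in> I" using ideal_power[OF I nm(2)] by simp
      thus ?thesis using I by (simp add: ideal_multL)
    qed
  qed
  finally show "x + y \<in> rad I" unfolding rad_def by blast
next
  fix r x assume "x \<in> rad I"
  then obtain n where "x ^ n \<in> I" unfolding rad_def by auto
  hence "r ^ n * x ^ n \<in> I" using ideal_multL[OF I] by blast
  thus "r * x \<in> rad I" unfolding rad_def by (auto simp: power_mult_distrib)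
qed

lemma rad_radical: assumes I: "is_ideal I" shows "radical (rad I)"
  unfolding radical_def
proof (intro conjI allI impI)
  show "is_ideal (rad I)" by (rule rad_ideal[OF I])
next
  fix x n assume "x ^ n \<in> rad I"
  then obtain m where "(x ^ n) ^ m \<in> I" unfolding rad_def by auto
  thus "x \<in> rad I" unfolding rad_def by (auto simp: power_mult[symmetric])
qed

lemma rad_sup: "I \<subseteq> rad I"
  unfolding rad_def by (auto intro: exI[of _ 1])

definition addgen :: "'r::comm_ring_1 set \<Rightarrow> 'r \<Rightarrow> 'r set" where
  "addgen I a = {i + r * a | i r. i \<in> I}"

lemma addgen_ideal: assumes I: "is_ideal I" shows "is_ideal (addgen I a)"
  unfolding is_ideal_def
proof (intro conjI ballI allI)
  have "0 = 0 + 0 * a" by simp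
  thus "0 \<in> addgen I a" unfolding addgen_def using ideal_0[OF I] by blast
next
  fix x y assume "x \<in> addgen I a" "y \<in> addgen I a"
  then obtain i r j t where "i \<in> I" "j \<in> I" "x = i + r * a" "y = j + t * a"
    unfolding addgen_def by auto
  moreover hence "x + y = (i + j) + (r + t) * a" by (simp add: algebra_simps)
  moreover have "i + j \<in> I" using ideal_add[OF I] calculation by blast
  ultimately show "x + y \<in> addgen I a" unfolding addgen_def by blast
next
  fix q x assume "x \<in> addgen I a"
  then obtain i r where "i \<in> I" "x = i + r * a" unfolding addgen_def by auto
  moreover hence "q * x = q * i + (q * r) * a" by (simp add: algebra_simps)
  moreover have "q * i \<in> I" using ideal_multL[OF I] calculation by blast
  ultimately show "q * x \<in> addgen I a" unfolding addgen_def by blast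
qed

lemma addgen_sup: "is_ideal I \<Longrightarrow> I \<subseteq> addgen I a"
proof
  fix x assume "x \<in> I"
  have "x = x + 0 * a" by simp
  thus "x \<in> addgen I a" unfolding addgen_def using \<open>x \<in> I\<close> by blast
qed

lemma addgen_mem: "is_ideal I \<Longrightarrow> a \<in> addgen I a"
proof -
  assume "is_ideal I"
  have "a = 0 + 1 * a" by simp
  thus "a \<in> addgen I a" unfolding addgen_def using ideal_0[OF \<open>is_ideal I\<close>] by blast
qed


lemma radical_decomp:
  assumes hom: "is_ring_hom phi" and noeth: "noetherian_ring TYPE('k)"
    and fm: "finite_module_over (phi::'k::comm_ring_1 \<Rightarrow> 'r::comm_ring_1)"
    and I: "radical (I::'r set)"
  shows "\<exists>Ps. finite Ps \<and> (\<forall>P\<in>Ps. primeI P) \<and> I = \<Inter>Ps"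
proof (rule ccontr)
  define good where "good J \<longleftrightarrow> (\<exists>Ps. finite Ps \<and> (\<forall>P\<in>Ps. primeI P) \<and> (J::'r set) = \<Inter>Ps)" for J
  assume "\<not> ?thesis"
  hence "I \<in> {J. radical J \<and> \<not> good J}" using I unfolding good_def by auto
  hence "{J. radical J \<and> \<not> good J} \<noteq> {}" by blast
  then obtain M where M: "M \<in> {J. radical J \<and> \<not> good J}"
    "\<forall>X\<in>{J. radical J \<and> \<not> good J}. M \<subseteq> X \<longrightarrow> X = M"
    using noeth_max[OF hom noeth fm, of "{J. radical J \<and> \<not> good J}"] radical_submod by blast
  have Mr: "radical M" and Mg: "\<not> good M" using M(1) by auto
  have Mi: "is_ideal M" using Mr unfolding radical_def by blast
  have max: "\<And>X. radical X \<Longrightarrow> M \<subseteq> X \<Longrightarrow> X \<noteq> M \<Longrightarrow> good X" using M(2) by blast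
  have "1 \<notin> M"
  proof
    assume "1 \<in> M"
    hence "M = UNIV" using ideal_multL[OF Mi, of 1] by auto
    hence "good M" unfolding good_def by (intro exI[of _ "{}"]) auto
    thus False using Mg by blast
  qed
  have "\<not> primeI M"
  proof
    assume "primeI M"
    hence "good M" unfolding good_def by (intro exI[of _ "{M}"]) auto
    thus False using Mg by blast
  qed
  then obtain a b where ab: "a * b \<in> M" "a \<notin> M" "b \<notin> M"
    using Mi \<open>1 \<notin> M\<close> unfolding primeI_def by blast
  have gd: "good (rad (addgen M x))" if "x \<notin> M" for x
  proof (rule max)
    show "radical (rad (addgen M x))" by (rule rad_radical[OF addgen_ideal[OF Mi]])
    show "M \<subseteq> rad (addgen M x)" using addgen_sup[OF Mi, of x] rad_sup[of "addgen M x"] by blast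
    show "rad (addgen M x) \<noteq> M" using addgen_mem[OF Mi, of x] rad_sup[of "addgen M x"] that by blast
  qed
  obtain Pa where Pa: "finite Pa" "\<forall>P\<in>Pa. primeI P" "rad (addgen M a) = \<Inter>Pa"
    using gd[OF ab(2)] unfolding good_def by blast
  obtain Pb where Pb: "finite Pb" "\<forall>P\<in>Pb. primeI P" "rad (addgen M b) = \<Inter>Pb"
    using gd[OF ab(3)] unfolding good_def by blast
  have "M = rad (addgen M a) \<inter> rad (addgen M b)"
  proof
    show "M \<subseteq> rad (addgen M a) \<inter> rad (addgen M b)"
      using addgen_sup[OF Mi] rad_sup by blast
  next
    show "rad (addgen M a) \<inter> rad (addgen M b) \<subseteq> M"
    proof
      fix x assume "x \<in> rad (addgen M a) \<inter> rad (addgen M b)"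
      then obtain n m i r j t where "i \<in> M" "j \<in> M" "x ^ n = i + r * a" "x ^ m = j + t * b"
        unfolding rad_def addgen_def by auto
      hence "x ^ (n + m) = i * (j + t * b) + r * (a * j) + (r * t) * (a * b)"
        by (simp add: power_add algebra_simps)
      also have "\<dots> \<in> M"
        using \<open>i \<in> M\<close> \<open>j \<in> M\<close> ab(1) Mi by (simp add: ideal_add ideal_multL ideal_multR)
      finally show "x \<in> M" using Mr unfolding radical_def by blast
    qed
  qed
  hence "good M" unfolding good_def using Pa Pb by (intro exI[of _ "Pa \<union> Pb"]) auto
  thus False using Mg by blast
qed


definition cls :: "'r::comm_ring_1 set \<Rightarrow> 'r \<Rightarrow> 'r set" where
  "cls I y = {y + x | x. x \<in> I}"

lemma cls_eq: assumes I: "is_ideal I" and d: "y - y0 \<in> I" shows "cls I y = cls I y0"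
proof
  show "cls I y \<subseteq> cls I y0"
  proof
    fix z assume "z \<in> cls I y"
    then obtain x where x: "x \<in> I" "z = y + x" unfolding cls_def by auto
    have "z = y0 + ((y - y0) + x)" using x by simp
    moreover have "(y - y0) + x \<in> I" using ideal_add[OF I d x(1)] .
    ultimately show "z \<in> cls I y0" unfolding cls_def by blast
  qed
next
  show "cls I y0 \<subseteq> cls I y"
  proof
    fix z assume "z \<in> cls I y0"
    then obtain x where x: "x \<in> I" "z = y0 + x" unfolding cls_def by auto
    have "z = y + (x - (y - y0))" using x by simp
    moreover have "x - (y - y0) \<in> I" using ideal_diff[OF I x(1) d] .
    ultimately show "z \<in> cls I y" unfolding cls_def by blast
  qed
qed

lemma cls_inter: "cls (I \<inter> J) y = cls I y \<inter> cls J y"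
  unfolding cls_def by auto

lemma cls_UNIV: "cls UNIV y = UNIV"
  unfolding cls_def by (auto intro: exI[of _ "x - y" for x])

lemma cls_zero: "cls {0} y = {y}"
  unfolding cls_def by auto

lemma roots_prime:
  assumes P: "primeI (P::'r::comm_ring_1 set)"
  shows "lead_coeff p \<notin> P \<Longrightarrow> finite (cls P ` {y. poly p y \<in> P})"
proof (induction "degree p" arbitrary: p)
  case 0
  have "[: coeff p 0 :] = p" using degree_0_id[OF 0(1)[symmetric]] .
  hence "poly p y = coeff p 0" for y by (metis poly_pCons poly_0 mult_zero_right add_0_right)
  moreover have "coeff p 0 \<notin> P" using 0 by simp
  ultimately have "{y. poly p y \<in> P} = {}" by auto
  thus ?case by simp
next
  case (Suc d p)
  show ?case
  proof (cases "{y. poly p y \<in> P} = {}")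
    case True thus ?thesis by simp
  next
    case False
    then obtain y0 where y0: "poly p y0 \<in> P" by auto
    define q where "q = synthetic_div p y0"
    have pq: "[:-y0, 1:] * q + [:poly p y0:] = p" unfolding q_def by (rule synthetic_div_correct')
    have dq: "degree q = d" unfolding q_def degree_synthetic_div using Suc(2) by simp
    have deg1: "degree [:-y0, (1::'r):] = 1" by simp
    have "coeff p (Suc d) = coeff ([:-y0, 1:] * q) (degree [:-y0, 1:] + degree q)"
      using arg_cong[OF pq, of "\<lambda>p. coeff p (Suc d)"] deg1 dq by simp
    also have "\<dots> = coeff q d" using coeff_mult_degree_sum[of "[:-y0, 1:]" q] dq by simp
    finally have "lead_coeff q = lead_coeff p" using dq Suc(2) by simp
    hence fq: "finite (cls P ` {y. poly q y \<in> P})" using Suc(1)[of q] dq Suc(3) by simp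
    have Pi: "is_ideal P" using P unfolding primeI_def by blast
    have "{y. poly p y \<in> P} \<subseteq> {y. y - y0 \<in> P} \<union> {y. poly q y \<in> P}"
    proof
      fix y assume "y \<in> {y. poly p y \<in> P}"
      hence "poly p y \<in> P" by simp
      moreover have "poly p y = (y - y0) * poly q y + poly p y0"
        using arg_cong[OF pq, of "\<lambda>p. poly p y"] by (simp add: algebra_simps)
      ultimately have "(y - y0) * poly q y \<in> P" using ideal_diff[OF Pi _ y0] by force
      thus "y \<in> {y. y - y0 \<in> P} \<union> {y. poly q y \<in> P}" using P unfolding primeI_def by blast
    qed
    hence "cls P ` {y. poly p y \<in> P} \<subseteq> cls P ` {y. y - y0 \<in> P} \<union> cls P ` {y. poly q y \<in> P}"
      by blast
    moreover have "cls P ` {y. y - y0 \<in> P} \<subseteq> {cls P y0}" using cls_eq[OF Pi] by blast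
    ultimately show ?thesis using fq by (meson finite.emptyI finite.insertI finite_UnI finite_subset)
  qed
qed

lemma cls_Inter_finite:
  assumes "finite Ps" shows "(\<And>P. P \<in> Ps \<Longrightarrow> finite (cls P ` Z)) \<Longrightarrow> finite (cls (\<Inter>Ps) ` Z)"
  using assms
proof (induction Ps rule: finite_induct)
  case empty
  have "cls (\<Inter>{}) ` Z \<subseteq> {UNIV}" using cls_UNIV by auto
  thus ?case using finite_subset by blast
next
  case (insert P Ps)
  have "cls (\<Inter>(insert P Ps)) ` Z \<subseteq> (\<lambda>(A, B). A \<inter> B) ` (cls P ` Z \<times> cls (\<Inter>Ps) ` Z)"
  proof
    fix X assume "X \<in> cls (\<Inter>(insert P Ps)) ` Z"
    then obtain z where "z \<in> Z" "X = cls (P \<inter> \<Inter>Ps) z" by auto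
    hence "X = (\<lambda>(A, B). A \<inter> B) (cls P z, cls (\<Inter>Ps) z)" by (simp add: cls_inter)
    thus "X \<in> (\<lambda>(A, B). A \<inter> B) ` (cls P ` Z \<times> cls (\<Inter>Ps) ` Z)" using \<open>z \<in> Z\<close> by blast
  qed
  moreover have "finite (cls P ` Z \<times> cls (\<Inter>Ps) ` Z)" using insert by auto
  ultimately show ?case using finite_subset by blast
qed

lemma roots_finite:
  assumes hom: "is_ring_hom phi" and noeth: "noetherian_ring TYPE('k)"
    and fm: "finite_module_over (phi::'k::comm_ring_1 \<Rightarrow> 'r::comm_ring_1)"
    and red: "reduced_ring TYPE('r)" and lc: "lead_coeff (p::'r poly) = 1"
  shows "finite {y. poly p y = 0}"
proof -
  define Z where "Z = {y. poly p y = 0}"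
  have "is_ideal ({0}::'r set)" unfolding is_ideal_def by simp
  moreover have "\<forall>(x::'r) n. x ^ n \<in> {0} \<longrightarrow> x \<in> {0}"
    using red unfolding reduced_ring_def by simp
  ultimately have "radical ({0}::'r set)" unfolding radical_def by blast
  then obtain Ps where Ps: "finite Ps" "\<forall>P\<in>Ps. primeI P" "({0}::'r set) = \<Inter>Ps"
    using radical_decomp[OF hom noeth fm \<open>radical ({0}::'r set)\<close>] by blast
  have "finite (cls P ` Z)" if "P \<in> Ps" for P
  proof -
    have P: "primeI P" using Ps(2) that by blast
    hence "lead_coeff p \<notin> P" using lc unfolding primeI_def by simp
    hence "finite (cls P ` {y. poly p y \<in> P})" by (rule roots_prime[OF P])
    moreover have "Z \<subseteq> {y. poly p y \<in> P}" using P unfolding Z_def primeI_def by (auto simp: ideal_0)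
    ultimately show ?thesis using finite_subset[OF image_mono] by blast
  qed
  hence "finite (cls (\<Inter>Ps) ` Z)" using cls_Inter_finite[OF Ps(1)] by blast
  moreover have "cls (\<Inter>Ps) ` Z = (\<lambda>y. {y}) ` Z" using Ps(3)[symmetric] by (simp add: cls_zero)
  ultimately have "finite ((\<lambda>y. {y}) ` Z)" by simp
  moreover have "inj_on (\<lambda>y. {y}) Z" by (auto simp: inj_on_def)
  ultimately show ?thesis unfolding Z_def[symmetric] using finite_imageD by blast
qed

lemma monic_poly_exists:
  fixes a :: "nat \<Rightarrow> 'r::comm_ring_1"
  shows "\<exists>p. lead_coeff p = 1 \<and> (\<forall>y. poly p y = y ^ n - (\<Sum>i<n. a i * y ^ i))"
proof -
  define p where "p = monom 1 n - (\<Sum>i<n. monom (a i) i)"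
  have cp: "coeff p j = (if n = j then 1 else 0) - (\<Sum>i<n. if i = j then a i else 0)" for j
    unfolding p_def by (simp add: coeff_sum)
  have "coeff p j = 0" if "j > n" for j using that unfolding cp by simp
  hence "degree p \<le> n" by (intro degree_le) auto
  moreover have "coeff p n = 1" unfolding cp by simp
  moreover hence "n \<le> degree p" by (intro le_degree) simp
  ultimately have "lead_coeff p = 1" by simp
  moreover have "poly p y = y ^ n - (\<Sum>i<n. a i * y ^ i)" for y
    unfolding p_def by (simp add: poly_sum poly_monom)
  ultimately show ?thesis by blast
qed

theorem mainTheorem17:
  fixes phi :: "'k::comm_ring_1 \<Rightarrow> 'r::comm_ring_1"
  assumes "noetherian_ring TYPE('k)"
    and "is_ring_hom phi"
    and "reduced_ring TYPE('r)"
    and "finite_module_over phi"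
  shows "finite (alg_auts phi)"
proof -
  note noeth = assms(1) and hom = assms(2) and red = assms(3) and fm = assms(4)
  obtain S where S: "finite S" "\<forall>r. \<exists>c. r = (\<Sum>s\<in>S. phi (c s) * s)"
    using fm unfolding finite_module_over_def by blast
  have ex: "\<exists>p. lead_coeff p = 1 \<and> poly p s = 0 \<and>
      (\<forall>f\<in>alg_auts phi. \<forall>y. f (poly p y) = poly p (f y))" for s
  proof -
    obtain n c where nc: "s ^ n = (\<Sum>i<n. phi (c i) * s ^ i)"
      using integral[OF hom noeth fm] by blast
    obtain p where p: "lead_coeff p = 1" "\<forall>y. poly p y = y ^ n - (\<Sum>i<n. phi (c i) * y ^ i)"
      using monic_poly_exists[of n "\<lambda>i. phi (c i)"] by blast
    have "f (poly p y) = poly p (f y)" if "f \<in> alg_auts phi" for f y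
    proof -
      have fh: "is_ring_hom f" and fl: "\<forall>c x. f (phi c * x) = phi c * f x"
        using that unfolding alg_auts_def by auto
      show ?thesis using p(2) by (simp add: hom_diff[OF fh] hom_power[OF fh] hom_sum[OF fh] fl)
    qed
    moreover have "poly p s = 0" using p(2) nc by simp
    ultimately show ?thesis using p(1) by blast
  qed
  define pol where "pol s = (SOME p. lead_coeff p = 1 \<and> poly p s = 0 \<and>
      (\<forall>f\<in>alg_auts phi. \<forall>y. f (poly p y) = poly p (f y)))" for s
  have pol: "lead_coeff (pol s) = 1 \<and> poly (pol s) s = 0 \<and>
      (\<forall>f\<in>alg_auts phi. \<forall>y. f (poly (pol s) y) = poly (pol s) (f y))" for s
    unfolding pol_def by (rule someI_ex[OF ex])
  define Z where "Z s = {y. poly (pol s) y = 0}" for s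
  have Zfin: "finite (Z s)" for s
    unfolding Z_def using roots_finite[OF hom noeth fm red conjunct1[OF pol]] .
  have inZ: "f s \<in> Z s" if "f \<in> alg_auts phi" for f s
  proof -
    have fh: "is_ring_hom f" using that unfolding alg_auts_def by auto
    have "\<forall>f\<in>alg_auts phi. \<forall>y. f (poly (pol s) y) = poly (pol s) (f y)" by (rule conjunct2[OF conjunct2[OF pol]])
    hence e: "f (poly (pol s) s) = poly (pol s) (f s)" using that by blast
    have "poly (pol s) s = 0" by (rule conjunct1[OF conjunct2[OF pol]])
    hence "f (poly (pol s) s) = 0" using hom_0[OF fh] by simp
    thus ?thesis unfolding Z_def using e by simp
  qed
  define res where "res f = (\<lambda>s\<in>S. f s)" for f :: "'r \<Rightarrow> 'r"
  have "res ` alg_auts phi \<subseteq> (\<Pi>\<^sub>E s\<in>S. Z s)"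
  proof
    fix h assume "h \<in> res ` alg_auts phi"
    then obtain f where "f \<in> alg_auts phi" "h = res f" by blast
    thus "h \<in> (\<Pi>\<^sub>E s\<in>S. Z s)" unfolding res_def using inZ by (simp add: restrict_PiE_iff)
  qed
  hence "finite (res ` alg_auts phi)" by (rule finite_subset[OF _ finite_PiE[OF S(1) Zfin]])
  moreover have "inj_on res (alg_auts phi)"
  proof (rule inj_onI)
    fix f g assume fg: "f \<in> alg_auts phi" "g \<in> alg_auts phi" "res f = res g"
    have fS: "f s = g s" if "s \<in> S" for s
      using fun_cong[OF fg(3), of s] that unfolding res_def by simp
    have ev: "h r = (\<Sum>s\<in>S. phi (c s) * h s)" if "h \<in> alg_auts phi" "r = (\<Sum>s\<in>S. phi (c s) * s)" for h r c
    proof -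
      have "is_ring_hom h" and "\<forall>c x. h (phi c * x) = phi c * h x"
        using that unfolding alg_auts_def by auto
      thus ?thesis using that(2) by (simp add: hom_sum)
    qed
    show "f = g"
    proof
      fix r obtain c where "r = (\<Sum>s\<in>S. phi (c s) * s)" using S(2) by blast
      hence "f r = (\<Sum>s\<in>S. phi (c s) * f s)" "g r = (\<Sum>s\<in>S. phi (c s) * g s)"
        using ev[OF fg(1)] ev[OF fg(2)] by blast+
      moreover have "(\<Sum>s\<in>S. phi (c s) * f s) = (\<Sum>s\<in>S. phi (c s) * g s)"
        by (rule sum.cong) (simp_all add: fS)
      ultimately show "f r = g r" by simp
    qed
  qed
  ultimately show ?thesis by (rule finite_imageD)
qed

end
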